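(* In the $\ell^1$ linear social choice setting, the pure stable lottery rule $f_{\mathrm{PSLR}}$ has worst-case distortion $\mathrm{D}(f_{\mathrm{PSLR}})=O(d)$.
   Context: Setting ($\ell^1$ linear social choice). Fix a dimension $d\ge 1$ and let $\Delta_d=\{x\in\mathbb{R}^d_{\ge 0}:\sum_i x^i=1\}$. An instance consists of a finite set $V$ of $n$ voters and a finite set $C$ of $m$ candidates, each a vector in $\Delta_d$, with every voter vector in $\mathrm{Cone}(C)$ (nonnegative linear combinations of candidate vectors). Utility: $u_v(c)=v^\top c$. Each voter reports a ranking of $C$ consistent with its utilities (ties broken arbitrarily); $\sigma$ is the profile. $\mathrm{UW}(c)=\sum_{v\in V}u_v(c)$. A randomized voting rule outputs a distribution over $C$ based only on the profile (neither voter nor candidate vectors are seen). Distortion on an instance: $\max_c\mathrm{UW}(c)/\mathbb{E}_{c\sim f}[\mathrm{UW}(c)]$; $\mathrm{D}(f)$ is the supremum over all instances, as a function of $d$. Stable lottery: for a committee $W\subseteq C$ and $c\in C$, $S_c(W)$ is the set of voters ranking $c$ above every member of $W$; a distribution $\mathcal W$ over committees of size $k$ is a stable lottery if $\mathbb{E}_{W\sim\mathcal W}[|S_c(W)|]\le n/k$ for all $c\in C$ (such lotteries exist for every profile). Pure stable lottery rule $f_{\mathrm{PSLR}}$: given a stable lottery $\mathcal W$ over committees of size $2d$, choose each $c\in C$ with probability $\frac{1}{2d}\Pr_{W\sim\mathcal W}[c\in W]$. *)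

theory Defs
  imports "HOL-Probability.Probability_Mass_Function"
begin

(* Vectors in R^d are modelled as functions nat => real; only indices i < d matter. *)

definition in_simplex :: "nat \<Rightarrow> (nat \<Rightarrow> real) \<Rightarrow> bool" where
  "in_simplex d x \<longleftrightarrow> (\<forall>i<d. x i \<ge> 0) \<and> (\<Sum>i<d. x i) = 1"

definition inner_d :: "nat \<Rightarrow> (nat \<Rightarrow> real) \<Rightarrow> (nat \<Rightarrow> real) \<Rightarrow> real" where
  "inner_d d x y = (\<Sum>i<d. x i * y i)"

definition in_cone :: "nat \<Rightarrow> nat set \<Rightarrow> (nat \<Rightarrow> nat \<Rightarrow> real) \<Rightarrow> (nat \<Rightarrow> real) \<Rightarrow> bool" where
  "in_cone d C cv x \<longleftrightarrow>
     (\<exists>lam :: nat \<Rightarrow> real. (\<forall>c\<in>C. lam c \<ge> 0) \<and> (\<forall>i<d. x i = (\<Sum>c\<in>C. lam c * cv c i)))"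

definition l1_instance :: "nat \<Rightarrow> nat set \<Rightarrow> nat set \<Rightarrow> (nat \<Rightarrow> nat \<Rightarrow> real)
     \<Rightarrow> (nat \<Rightarrow> nat \<Rightarrow> real) \<Rightarrow> bool" where
  "l1_instance d V C vv cv \<longleftrightarrow> finite V \<and> finite C \<and>
     (\<forall>v\<in>V. in_simplex d (vv v)) \<and> (\<forall>c\<in>C. in_simplex d (cv c)) \<and>
     (\<forall>v\<in>V. in_cone d C cv (vv v))"

definition utility :: "nat \<Rightarrow> (nat \<Rightarrow> nat \<Rightarrow> real) \<Rightarrow> (nat \<Rightarrow> nat \<Rightarrow> real) \<Rightarrow> nat \<Rightarrow> nat \<Rightarrow> real" where
  "utility d vv cv v c = inner_d d (vv v) (cv c)"

definition UW :: "nat \<Rightarrow> nat set \<Rightarrow> (nat \<Rightarrow> nat \<Rightarrow> real) \<Rightarrow> (nat \<Rightarrow> nat \<Rightarrow> real) \<Rightarrow> nat \<Rightarrow> real" where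
  "UW d V vv cv c = (\<Sum>v\<in>V. utility d vv cv v c)"

(* A profile: rk v c is the position of c in voter v's ranking (smaller = better);
   it is a strict ranking of C (injective) consistent with utilities (ties broken arbitrarily). *)
definition consistent_profile :: "nat \<Rightarrow> nat set \<Rightarrow> nat set \<Rightarrow> (nat \<Rightarrow> nat \<Rightarrow> real)
     \<Rightarrow> (nat \<Rightarrow> nat \<Rightarrow> real) \<Rightarrow> (nat \<Rightarrow> nat \<Rightarrow> nat) \<Rightarrow> bool" where
  "consistent_profile d V C vv cv rk \<longleftrightarrow>
     (\<forall>v\<in>V. inj_on (rk v) C \<and>
        (\<forall>c\<in>C. \<forall>c'\<in>C. utility d vv cv v c > utility d vv cv v c' \<longrightarrow> rk v c < rk v c'))"

definition S_set :: "nat set \<Rightarrow> (nat \<Rightarrow> nat \<Rightarrow> nat) \<Rightarrow> nat \<Rightarrow> nat set \<Rightarrow> nat set" where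
  "S_set V rk c W = {v\<in>V. \<forall>w\<in>W. rk v c < rk v w}"

definition stable_lottery :: "nat set \<Rightarrow> nat set \<Rightarrow> (nat \<Rightarrow> nat \<Rightarrow> nat) \<Rightarrow> nat \<Rightarrow> nat set pmf \<Rightarrow> bool" where
  "stable_lottery V C rk k Wd \<longleftrightarrow>
     (\<forall>W\<in>set_pmf Wd. W \<subseteq> C \<and> card W = k) \<and>
     (\<forall>c\<in>C. measure_pmf.expectation Wd (\<lambda>W. real (card (S_set V rk c W)))
              \<le> real (card V) / real k)"

definition pslr_prob :: "nat \<Rightarrow> nat set pmf \<Rightarrow> nat \<Rightarrow> real" where
  "pslr_prob d Wd c = (1 / real (2 * d)) * measure_pmf.prob Wd {W. c \<in> W}"

end

theory Submission
  imports Defs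
begin

lemma inner_bounds:
  assumes "in_simplex d x" "in_simplex d y"
  shows "0 \<le> inner_d d x y" "inner_d d x y \<le> 1"
proof -
  show "0 \<le> inner_d d x y" using assms unfolding in_simplex_def inner_d_def
    by (intro sum_nonneg) auto
  have "y i \<le> 1" if "i < d" for i
  proof -
    have "y i \<le> (\<Sum>j<d. y j)"
      using assms(2) that unfolding in_simplex_def by (intro member_le_sum) auto
    then show ?thesis using assms(2) unfolding in_simplex_def by simp
  qed
  then have "inner_d d x y \<le> (\<Sum>i<d. x i)" unfolding inner_d_def
    using assms(1) unfolding in_simplex_def
    by (intro sum_mono) (simp add: mult_left_le)
  then show "inner_d d x y \<le> 1" using assms(1) unfolding in_simplex_def by simp
qed

lemma cs_sum:
  fixes N :: "nat \<Rightarrow> real"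
  assumes "d \<ge> 1"
  shows "(\<Sum>i<d. N i)^2 \<le> real d * (\<Sum>i<d. (N i)^2)"
proof -
  define s where "s = (\<Sum>i<d. N i)"
  have "0 \<le> (\<Sum>i<d. (N i - s / real d)^2)" by (intro sum_nonneg) auto
  also have "\<dots> = (\<Sum>i<d. (N i)^2 - 2 * (s / real d) * N i + (s/real d)^2)"
    by (intro sum.cong) (auto simp: power2_eq_square algebra_simps)
  also have "\<dots> = (\<Sum>i<d. (N i)^2) - 2 * (s / real d) * s + real d * (s/real d)^2"
    by (simp add: sum.distrib sum_subtractf sum_distrib_left s_def)
  also have "\<dots> = (\<Sum>i<d. (N i)^2) - s^2 / real d"
    using assms by (simp add: power2_eq_square field_simps)
  finally show ?thesis using assms unfolding s_def[symmetric]
    by (simp add: field_simps)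
qed

lemma UW_alt:
  "UW d V vv cv c = (\<Sum>i<d. (\<Sum>v\<in>V. vv v i) * cv c i)"
  unfolding UW_def utility_def inner_d_def
  by (simp add: sum_distrib_right sum.swap[of _ V])

lemma UW_nonneg:
  assumes "l1_instance d V C vv cv" "c \<in> C"
  shows "0 \<le> UW d V vv cv c"
  using assms unfolding UW_def utility_def l1_instance_def
  by (intro sum_nonneg) (auto intro: inner_bounds)

lemma max_UW_ge:
  assumes inst: "l1_instance d V C vv cv" and d: "d \<ge> 1" and c0: "c0 \<in> C"
    and mx: "\<forall>c\<in>C. UW d V vv cv c \<le> UW d V vv cv c0"
  shows "real (card V) / real d \<le> UW d V vv cv c0"
proof -
  define N where "N i = (\<Sum>v\<in>V. vv v i)" for i
  define U where "U c = UW d V vv cv c" for c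
  have finV: "finite V" and finC: "finite C" using inst unfolding l1_instance_def by auto
  have U_alt: "U c = (\<Sum>i<d. N i * cv c i)" for c unfolding U_def N_def by (rule UW_alt)
  have "\<forall>v\<in>V. \<exists>lam. (\<forall>c\<in>C. lam c \<ge> 0) \<and> (\<forall>i<d. vv v i = (\<Sum>c\<in>C. lam c * cv c i))"
    using inst unfolding l1_instance_def in_cone_def by auto
  then obtain lam where lam0: "\<And>v c. v \<in> V \<Longrightarrow> c \<in> C \<Longrightarrow> lam v c \<ge> 0"
    and lamv: "\<And>v i. v \<in> V \<Longrightarrow> i < d \<Longrightarrow> vv v i = (\<Sum>c\<in>C. lam v c * cv c i)"
    by metis
  have lam1: "(\<Sum>c\<in>C. lam v c) = 1" if v: "v \<in> V" for v
  proof -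
    have "1 = (\<Sum>i<d. vv v i)" using inst v unfolding l1_instance_def in_simplex_def by auto
    also have "\<dots> = (\<Sum>i<d. \<Sum>c\<in>C. lam v c * cv c i)" using lamv v by simp
    also have "\<dots> = (\<Sum>c\<in>C. lam v c * (\<Sum>i<d. cv c i))"
      by (simp add: sum.swap[of _ "{..<d}"] sum_distrib_left)
    also have "\<dots> = (\<Sum>c\<in>C. lam v c)"
      using inst unfolding l1_instance_def in_simplex_def by simp
    finally show ?thesis by simp
  qed
  have sN: "(\<Sum>i<d. N i) = real (card V)"
  proof -
    have "(\<Sum>i<d. N i) = (\<Sum>v\<in>V. \<Sum>i<d. vv v i)" unfolding N_def by (rule sum.swap)
    also have "\<dots> = (\<Sum>v\<in>V. 1)"
      using inst unfolding l1_instance_def in_simplex_def by (intro sum.cong) auto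
    finally show ?thesis by simp
  qed
  have "(\<Sum>i<d. (N i)^2) = (\<Sum>i<d. N i * (\<Sum>v\<in>V. vv v i))"
    unfolding N_def by (simp add: power2_eq_square)
  also have "\<dots> = (\<Sum>v\<in>V. \<Sum>i<d. N i * vv v i)"
    by (simp add: sum_distrib_left sum.swap[of _ "{..<d}"])
  also have "\<dots> = (\<Sum>v\<in>V. \<Sum>i<d. N i * (\<Sum>c\<in>C. lam v c * cv c i))"
    using lamv by (intro sum.cong) auto
  also have "\<dots> = (\<Sum>v\<in>V. \<Sum>c\<in>C. lam v c * U c)"
  proof (rule sum.cong[OF refl])
    fix v assume "v \<in> V"
    have "(\<Sum>i<d. N i * (\<Sum>c\<in>C. lam v c * cv c i)) = (\<Sum>i<d. \<Sum>c\<in>C. lam v c * (N i * cv c i))"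
      by (simp add: sum_distrib_left algebra_simps)
    also have "\<dots> = (\<Sum>c\<in>C. \<Sum>i<d. lam v c * (N i * cv c i))" by (rule sum.swap)
    also have "\<dots> = (\<Sum>c\<in>C. lam v c * U c)" unfolding U_alt by (simp add: sum_distrib_left)
    finally show "(\<Sum>i<d. N i * (\<Sum>c\<in>C. lam v c * cv c i)) = (\<Sum>c\<in>C. lam v c * U c)" .
  qed
  also have "\<dots> \<le> (\<Sum>v\<in>V. \<Sum>c\<in>C. lam v c * U c0)"
    using mx lam0 unfolding U_def by (intro sum_mono mult_left_mono) auto
  also have "\<dots> = (\<Sum>v\<in>V. U c0)"
    using lam1 by (simp add: sum_distrib_right[symmetric])
  also have "\<dots> = real (card V) * U c0" by simp
  finally have A: "(\<Sum>i<d. (N i)^2) \<le> real (card V) * U c0" .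
  have B: "(real (card V))^2 \<le> real d * (real (card V) * U c0)"
  proof -
    have "(real (card V))^2 \<le> real d * (\<Sum>i<d. (N i)^2)" using cs_sum[OF d, of N] sN by simp
    also have "\<dots> \<le> real d * (real (card V) * U c0)" using A by (intro mult_left_mono) auto
    finally show ?thesis .
  qed
  show ?thesis
  proof (cases "card V = 0")
    case True then show ?thesis using UW_nonneg[OF inst c0] by simp
  next
    case False
    then have "real (card V) \<le> real d * U c0" using B
      by (simp add: power2_eq_square mult.left_commute)
    then show ?thesis using d unfolding U_def by (simp add: field_simps)
  qed
qed

lemma committee_bound:
  assumes inst: "l1_instance d V C vv cv" and cons: "consistent_profile d V C vv cv rk"
    and c0: "c0 \<in> C" and WC: "W \<subseteq> C" and finW: "finite W"
  shows "UW d V vv cv c0 - real (card (S_set V rk c0 W)) \<le> (\<Sum>w\<in>W. UW d V vv cv w)"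
proof -
  define u where "u v c = utility d vv cv v c" for v c
  define S where "S = S_set V rk c0 W"
  have finV: "finite V" using inst unfolding l1_instance_def by auto
  have SV: "S \<subseteq> V" unfolding S_def S_set_def by auto
  have u0: "0 \<le> u v c" "u v c \<le> 1" if "v \<in> V" "c \<in> C" for v c
    using inst that inner_bounds unfolding u_def utility_def l1_instance_def by auto
  have key: "u v c0 \<le> (\<Sum>w\<in>W. u v w)" if v: "v \<in> V - S" for v
  proof -
    from v obtain w where w: "w \<in> W" "\<not> rk v c0 < rk v w" unfolding S_def S_set_def by auto
    have "u v c0 \<le> u v w"
    proof (rule ccontr)
      assume "\<not> ?thesis"
      then have "rk v c0 < rk v w" using cons v w WC c0 unfolding consistent_profile_def u_def by auto
      then show False using w by simp
    qed
    also have "\<dots> \<le> (\<Sum>w\<in>W. u v w)"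
      using w finW WC u0 v by (intro member_le_sum) auto
    finally show ?thesis .
  qed
  have "UW d V vv cv c0 = (\<Sum>v\<in>V - S. u v c0) + (\<Sum>v\<in>S. u v c0)"
    unfolding UW_def u_def using finV SV by (metis add.commute sum.subset_diff)
  also have "(\<Sum>v\<in>S. u v c0) \<le> (\<Sum>v\<in>S. 1)" using SV u0 c0 by (intro sum_mono) auto
  also have "(\<Sum>v\<in>V - S. u v c0) \<le> (\<Sum>v\<in>V - S. \<Sum>w\<in>W. u v w)" using key by (intro sum_mono) auto
  also have "\<dots> \<le> (\<Sum>v\<in>V. \<Sum>w\<in>W. u v w)"
    using finV u0 WC by (intro sum_mono2) (auto intro!: sum_nonneg)
  also have "\<dots> = (\<Sum>w\<in>W. UW d V vv cv w)" unfolding UW_def u_def by (rule sum.swap)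
  finally show ?thesis unfolding S_def by simp
qed

theorem theorem9:
  shows "\<exists>K::real. K > 0 \<and>
    (\<forall>d::nat. \<forall>V C vv cv rk Wd.
       d \<ge> 1 \<longrightarrow> l1_instance d V C vv cv \<longrightarrow>
       consistent_profile d V C vv cv rk \<longrightarrow>
       stable_lottery V C rk (2 * d) Wd \<longrightarrow>
       (\<forall>c\<in>C. UW d V vv cv c
          \<le> K * real d * (\<Sum>c'\<in>C. pslr_prob d Wd c' * UW d V vv cv c')))"
proof (intro exI[of _ 4] conjI allI impI ballI)
  fix d :: nat and V C vv cv rk Wd c
  assume d: "d \<ge> 1" and inst: "l1_instance d V C vv cv" and cons: "consistent_profile d V C vv cv rk"
    and st: "stable_lottery V C rk (2 * d) Wd" and c: "c \<in> C"
  define U where "U c = UW d V vv cv c" for c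
  have finV: "finite V" and finC: "finite C" using inst unfolding l1_instance_def by auto
  obtain c0 where c0: "c0 \<in> C" and c0m: "U c0 = Max (U ` C)"
  proof -
    have "Max (U ` C) \<in> U ` C" using finC c by (intro Max_in) auto
    then show ?thesis using that by auto
  qed
  have mx: "\<forall>c\<in>C. U c \<le> U c0" using c0m finC by auto
  define P where "P = set_pmf Wd"
  define p where "p = pmf Wd"
  define S where "S W = S_set V rk c0 W" for W
  have PC: "\<And>W. W \<in> P \<Longrightarrow> W \<subseteq> C \<and> card W = 2 * d"
    using st unfolding stable_lottery_def P_def by auto
  have finP: "finite P" using PC finC by (metis finite_Pow_iff rev_finite_subset subsetI PowI)
  have finW: "\<And>W. W \<in> P \<Longrightarrow> finite W" using PC finC finite_subset by metis
  have n0: "real (card V) / real d \<le> U c0"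
    using max_UW_ge[OF inst d c0] mx unfolding U_def by auto
  have ES: "measure_pmf.expectation Wd (\<lambda>W. real (card (S W))) \<le> real (card V) / real (2 * d)"
    using st c0 unfolding stable_lottery_def S_def by auto
  have ES2: "measure_pmf.expectation Wd (\<lambda>W. real (card (S W))) = (\<Sum>W\<in>P. real (card (S W)) * p W)"
    unfolding p_def by (rule integral_measure_pmf_real) (use finP P_def in auto)
  have prob: "measure_pmf.prob Wd {W. c' \<in> W} = (\<Sum>W\<in>P. if c' \<in> W then p W else 0)" for c'
  proof -
    have "measure_pmf.prob Wd {W. c' \<in> W} = measure_pmf.prob Wd (P \<inter> {W. c' \<in> W})"
      using measure_Int_set_pmf[of Wd "{W. c' \<in> W}"] unfolding P_def by (simp add: Int_commute)
    also have "\<dots> = sum p (P \<inter> {W. c' \<in> W})"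
      unfolding p_def using finP by (intro measure_measure_pmf_finite) auto
    also have "\<dots> = (\<Sum>W\<in>P. if c' \<in> W then p W else 0)"
      using finP by (simp add: sum.inter_restrict)
    finally show ?thesis .
  qed
  define T where "T = (\<Sum>W\<in>P. p W * (\<Sum>w\<in>W. U w))"
  have rhs: "(\<Sum>c'\<in>C. pslr_prob d Wd c' * U c') = T / real (2 * d)"
  proof -
    have "(\<Sum>c'\<in>C. pslr_prob d Wd c' * U c') = (\<Sum>c'\<in>C. \<Sum>W\<in>P. (if c' \<in> W then p W * U c' else 0)) / real (2 * d)"
    proof -
      have "pslr_prob d Wd c' * U c' = (\<Sum>W\<in>P. (if c' \<in> W then p W * U c' else 0)) / real (2 * d)" for c'
      proof -
        have "(\<Sum>W\<in>P. if c' \<in> W then p W else 0) * U c' = (\<Sum>W\<in>P. (if c' \<in> W then p W * U c' else 0))"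
          by (simp add: sum_distrib_right) (intro sum.cong; simp)
        then show ?thesis unfolding pslr_prob_def prob by simp
      qed
      then show ?thesis by (simp add: sum_divide_distrib)
    qed
    also have "(\<Sum>c'\<in>C. \<Sum>W\<in>P. (if c' \<in> W then p W * U c' else 0)) = (\<Sum>W\<in>P. \<Sum>c'\<in>C. (if c' \<in> W then p W * U c' else 0))"
      by (rule sum.swap)
    also have "\<dots> = T" unfolding T_def
    proof (rule sum.cong[OF refl])
      fix W assume W: "W \<in> P"
      have "(\<Sum>c'\<in>C. (if c' \<in> W then p W * U c' else 0)) = (\<Sum>c'\<in>C \<inter> W. p W * U c')"
        using finC by (simp add: sum.inter_restrict)
      also have "C \<inter> W = W" using PC[OF W] by auto
      finally show "(\<Sum>c'\<in>C. (if c' \<in> W then p W * U c' else 0)) = p W * (\<Sum>w\<in>W. U w)"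
        by (simp add: sum_distrib_left)
    qed
    finally show ?thesis .
  qed
  have sp: "(\<Sum>W\<in>P. p W) = 1" unfolding p_def P_def by (rule sum_pmf_eq_1) (use finP P_def in auto)
  have "(\<Sum>W\<in>P. p W * (U c0 - real (card (S W)))) \<le> T"
    unfolding T_def
  proof (rule sum_mono)
    fix W assume W: "W \<in> P"
    show "p W * (U c0 - real (card (S W))) \<le> p W * (\<Sum>w\<in>W. U w)"
      using committee_bound[OF inst cons c0, of W] PC[OF W] finW[OF W]
      unfolding U_def S_def p_def by (intro mult_left_mono) auto
  qed
  moreover have "(\<Sum>W\<in>P. p W * (U c0 - real (card (S W)))) = U c0 - (\<Sum>W\<in>P. real (card (S W)) * p W)"
    using sp by (simp add: algebra_simps sum_subtractf sum_distrib_left[symmetric])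
  ultimately have "U c0 - real (card V) / real (2 * d) \<le> T" using ES ES2 by linarith
  moreover have "real (card V) / real (2 * d) = (real (card V) / real d) / 2" by simp
  ultimately have "U c0 / 2 \<le> T" using n0 by linarith
  then have "U c0 \<le> 4 * real d * (T / real (2 * d))" using d by (simp add: field_simps)
  then show "UW d V vv cv c \<le> 4 * real d * (\<Sum>c'\<in>C. pslr_prob d Wd c' * UW d V vv cv c')"
    using rhs mx c unfolding U_def by fastforce
qed (simp)

end
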